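(* Let $\theta>1$, $t>0$, let $G:\mathbb R\to\mathbb R$ be bounded, and let $\{\mu_N\}$ be any sequence of probability measures on $\Omega_N$. Then $$\limsup_{N\to\infty}\mathbb E_{\mu_N}\Big[\Big|\int_0^tN^{1-\theta}\sum_{x\in\Lambda_N}G(\tfrac xN)r_N^-(\tfrac xN)(\eta_x(sN^2)-\alpha)\,ds\Big|\Big]=0,$$ $$\limsup_{N\to\infty}\mathbb E_{\mu_N}\Big[\Big|\int_0^tN^{1-\theta}\sum_{x\in\Lambda_N}G(\tfrac xN)r_N^+(\tfrac xN)(\eta_x(sN^2)-\beta)\,ds\Big|\Big]=0.$$
   Context: Fix $\gamma>2$, $p(0)=0$, $p(z)=c_\gamma|z|^{-\gamma-1}$ ($z\ne0$) with $c_\gamma$ normalizing; $\alpha,\beta\in(0,1)$, $\kappa>0$. $\Lambda_N=\{1,\dots,N-1\}$, $\Omega_N=\{0,1\}^{\Lambda_N}$; $\sigma^{x,y}\eta$ exchanges $\eta_x,\eta_y$; $\sigma^x\eta$ flips $\eta_x$; $c_x(\eta;a)=\eta_x(1-a)+(1-\eta_x)a$. $L_N=L_N^0+L_N^\ell+L_N^r$, $(L_N^0f)(\eta)=\frac12\sum_{x,y\in\Lambda_N}p(x-y)[f(\sigma^{x,y}\eta)-f(\eta)]$, $(L_N^\ell f)(\eta)=\frac{\kappa}{N^\theta}\sum_{x\in\Lambda_N,y\le0}p(x-y)c_x(\eta;\alpha)[f(\sigma^x\eta)-f(\eta)]$, $(L_N^rf)(\eta)=\frac{\kappa}{N^\theta}\sum_{x\in\Lambda_N,y\ge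 N}p(x-y)c_x(\eta;\beta)[f(\sigma^x\eta)-f(\eta)]$. $(\eta(t))_{t\ge0}$ is the Markov process on $\Omega_N$ with generator $L_N$ and initial law $\mu_N$; $\mathbb E_{\mu_N}$ is the corresponding expectation. $r_N^-(\frac xN)=\sum_{y\ge x}p(y)$, $r_N^+(\frac xN)=\sum_{y\le x-N}p(y)$. *)

theory Defs
  imports "HOL-Probability.Probability"
begin

text \<open>Configurations: eta :: int => bool, with eta x = True meaning a particle at x.
  Omega_N is the set of configurations vanishing outside Lambda_N = {1..N-1}.\<close>

definition Lam :: "nat \<Rightarrow> int set" where
  "Lam N = {1 .. int N - 1}"

definition Conf :: "nat \<Rightarrow> (int \<Rightarrow> bool) set" where
  "Conf N = {\<eta>. \<forall>x. \<eta> x \<longrightarrow> x \<in> Lam N}"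

definition cgam :: "real \<Rightarrow> real" where
  "cgam \<gamma> = 1 / (\<Sum>\<^sub>\<infinity>z\<in>(UNIV - {0::int}). \<bar>real_of_int z\<bar> powr (-\<gamma>-1))"

definition pker :: "real \<Rightarrow> int \<Rightarrow> real" where
  "pker \<gamma> z = (if z = 0 then 0 else cgam \<gamma> * \<bar>real_of_int z\<bar> powr (-\<gamma>-1))"

definition swap :: "(int \<Rightarrow> bool) \<Rightarrow> int \<Rightarrow> int \<Rightarrow> (int \<Rightarrow> bool)" where
  "swap \<eta> x y = \<eta>(x := \<eta> y, y := \<eta> x)"

definition flip :: "(int \<Rightarrow> bool) \<Rightarrow> int \<Rightarrow> (int \<Rightarrow> bool)" where
  "flip \<eta> x = \<eta>(x := \<not> \<eta> x)"

definition crate :: "int \<Rightarrow> (int \<Rightarrow> bool) \<Rightarrow> real \<Rightarrow> real" where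
  "crate x \<eta> a = (if \<eta> x then 1 - a else a)"

definition gen :: "real \<Rightarrow> real \<Rightarrow> real \<Rightarrow> real \<Rightarrow> real \<Rightarrow> nat
    \<Rightarrow> ((int \<Rightarrow> bool) \<Rightarrow> real) \<Rightarrow> (int \<Rightarrow> bool) \<Rightarrow> real" where
  "gen \<gamma> \<kappa> \<theta> \<alpha> \<beta> N f \<eta> =
     (1/2) * (\<Sum>x\<in>Lam N. \<Sum>y\<in>Lam N. pker \<gamma> (x - y) * (f (swap \<eta> x y) - f \<eta>))
   + \<kappa> / real N powr \<theta> * (\<Sum>x\<in>Lam N. \<Sum>\<^sub>\<infinity>y\<in>{..0}. pker \<gamma> (x - y) * crate x \<eta> \<alpha> * (f (flip \<eta> x) - f \<eta>))
   + \<kappa> / real N powr \<theta> * (\<Sum>x\<in>Lam N. \<Sum>\<^sub>\<infinity>y\<in>{int N..}. pker \<gamma> (x - y) * crate x \<eta> \<beta> * (f (flip \<eta> x) - f \<eta>))"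

definition trans :: "real \<Rightarrow> real \<Rightarrow> real \<Rightarrow> real \<Rightarrow> real \<Rightarrow> nat \<Rightarrow> real
    \<Rightarrow> (int \<Rightarrow> bool) \<Rightarrow> (int \<Rightarrow> bool) \<Rightarrow> real" where
  "trans \<gamma> \<kappa> \<theta> \<alpha> \<beta> N t \<xi> \<zeta> =
     (\<Sum>k. t ^ k / fact k * ((gen \<gamma> \<kappa> \<theta> \<alpha> \<beta> N ^^ k) (\<lambda>\<eta>. of_bool (\<eta> = \<zeta>)) \<xi>))"

text \<open>X is (a cadlag version of) the Markov process with generator L_N and initial law mu,
  realized on the probability space M: cadlag paths in the discrete space Omega_N, measurable
  coordinates, and the finite-dimensional distributions of the Markov chain.\<close>
definition markov_proc :: "real \<Rightarrow> real \<Rightarrow> real \<Rightarrow> real \<Rightarrow> real \<Rightarrow> nat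
    \<Rightarrow> (int \<Rightarrow> bool) pmf \<Rightarrow> 'w measure \<Rightarrow> (real \<Rightarrow> 'w \<Rightarrow> (int \<Rightarrow> bool)) \<Rightarrow> bool" where
  "markov_proc \<gamma> \<kappa> \<theta> \<alpha> \<beta> N \<mu> M X \<longleftrightarrow>
     prob_space M \<and>
     (\<forall>t\<ge>0. X t \<in> M \<rightarrow>\<^sub>M count_space UNIV) \<and>
     (\<forall>\<omega>\<in>space M. \<forall>t\<ge>0. X t \<omega> \<in> Conf N) \<and>
     (\<forall>\<omega>\<in>space M. \<forall>t\<ge>0. \<exists>\<delta>>0. \<forall>s. t \<le> s \<and> s < t + \<delta> \<longrightarrow> X s \<omega> = X t \<omega>) \<and>
     (\<forall>\<omega>\<in>space M. \<forall>t>0. \<exists>\<delta>>0. \<exists>\<xi>. \<forall>s. t - \<delta> < s \<and> s < t \<longrightarrow> X s \<omega> = \<xi>) \<and>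
     (\<forall>ts \<xi>s. sorted_wrt (<) ts \<and> (\<forall>s\<in>set ts. 0 \<le> s) \<and> length \<xi>s = length ts \<longrightarrow>
        measure M {\<omega>\<in>space M. \<forall>i<length ts. X (ts ! i) \<omega> = \<xi>s ! i} =
        (\<Sum>\<xi>0\<in>Conf N. pmf \<mu> \<xi>0 *
           (\<Prod>i<length ts. trans \<gamma> \<kappa> \<theta> \<alpha> \<beta> N
               (ts ! i - (if i = 0 then 0 else ts ! (i - 1)))
               (if i = 0 then \<xi>0 else \<xi>s ! (i - 1)) (\<xi>s ! i))))"

definition rminus :: "real \<Rightarrow> int \<Rightarrow> real" where
  "rminus \<gamma> x = (\<Sum>\<^sub>\<infinity>y\<in>{x..}. pker \<gamma> y)"

definition rplus :: "real \<Rightarrow> nat \<Rightarrow> int \<Rightarrow> real" where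
  "rplus \<gamma> N x = (\<Sum>\<^sub>\<infinity>y\<in>{..x - int N}. pker \<gamma> y)"

end

theory Submission imports Defs begin

lemma cgam_nonneg: "0 \<le> cgam \<gamma>"
  unfolding cgam_def by (intro divide_nonneg_nonneg infsum_nonneg) auto

lemma pker_nonneg: "0 \<le> pker \<gamma> z"
  unfolding pker_def using cgam_nonneg by auto

lemma pker_neg: "pker \<gamma> (- z) = pker \<gamma> z"
  unfolding pker_def by auto

lemma summ_yp:
  assumes "\<gamma> > 1"
  shows "(\<lambda>y. real_of_int y * pker \<gamma> y) summable_on {1::int..}"
proof -
  have "summable (\<lambda>n. real n powr (-\<gamma>))"
    using assms by (subst summable_real_powr_iff) auto
  then have "(\<lambda>n. real n powr (-\<gamma>)) summable_on UNIV"
    by (subst summable_on_UNIV_nonneg_real_iff) auto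
  then have "(\<lambda>n. real n powr (-\<gamma>)) summable_on {1::nat..}"
    by (rule summable_on_subset_banach) auto
  then have "(\<lambda>n. cgam \<gamma> * real n powr (-\<gamma>)) summable_on {1::nat..}"
    by (rule summable_on_cmult_right)
  then have "((\<lambda>y. real_of_int y * pker \<gamma> y) \<circ> int) summable_on {1::nat..}"
  proof (rule summable_on_cong[THEN iffD1, rotated])
    fix n :: nat assume "n \<in> {1..}"
    then have n: "real n > 0" by auto
    have "real n * real n powr (-\<gamma>-1) = real n powr (-\<gamma>)"
      using n by (simp add: powr_diff powr_minus field_simps)
    then show "cgam \<gamma> * real n powr (-\<gamma>) = ((\<lambda>y. real_of_int y * pker \<gamma> y) \<circ> int) n"
      using n by (simp add: pker_def)
  qed
  moreover have "int ` {1::nat..} = {1::int..}"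
  proof (intro equalityI subsetI)
    fix x :: int assume "x \<in> {1..}"
    then show "x \<in> int ` {1..}" by (intro image_eqI[of _ _ "nat x"]) auto
  qed auto
  ultimately show ?thesis
    by (metis inj_on_of_nat summable_on_reindex)
qed

lemma summ_p:
  assumes "\<gamma> > 1"
  shows "pker \<gamma> summable_on {1::int..}"
proof (rule summable_on_comparison_test[OF summ_yp[OF assms]])
  fix x :: int assume "x \<in> {1..}"
  then have "1 * pker \<gamma> x \<le> real_of_int x * pker \<gamma> x"
    by (intro mult_right_mono) (auto simp: pker_nonneg)
  then show "pker \<gamma> x \<le> real_of_int x * pker \<gamma> x" by simp
qed (simp add: pker_nonneg)

lemma infsum_fsum:
  fixes f :: "'i \<Rightarrow> 'a \<Rightarrow> real"
  assumes "finite I" "\<And>i. i \<in> I \<Longrightarrow> f i summable_on A"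
  shows "(\<lambda>y. \<Sum>i\<in>I. f i y) summable_on A \<and> infsum (\<lambda>y. \<Sum>i\<in>I. f i y) A = (\<Sum>i\<in>I. infsum (f i) A)"
  using assms
proof (induction I rule: finite_induct)
  case empty then show ?case by simp
next
  case (insert i I)
  then show ?case
    by (simp add: summable_on_add infsum_add)
qed

definition Sg :: "real \<Rightarrow> real" where
  "Sg \<gamma> = infsum (\<lambda>y. real_of_int y * pker \<gamma> y) {1::int..}"

lemma rminus_eq:
  assumes "x \<ge> 1"
  shows "rminus \<gamma> x = infsum (\<lambda>y. if x \<le> y then pker \<gamma> y else 0) {1::int..}"
  unfolding rminus_def by (rule infsum_cong_neutral) (use assms in auto)

lemma rminus_nonneg: "0 \<le> rminus \<gamma> x"
  unfolding rminus_def by (rule infsum_nonneg) (simp add: pker_nonneg)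

lemma rplus_nonneg: "0 \<le> rplus \<gamma> N x"
  unfolding rplus_def by (rule infsum_nonneg) (simp add: pker_nonneg)

lemma sum_rminus:
  assumes "\<gamma> > 1"
  shows "(\<Sum>x\<in>Lam N. rminus \<gamma> x) \<le> Sg \<gamma>"
proof -
  let ?f = "\<lambda>x y. if x \<le> y then pker \<gamma> y else 0"
  have summ: "?f x summable_on {1..}" for x
    by (rule summable_on_comparison_test[OF summ_p[OF assms]]) (auto simp: pker_nonneg)
  have "(\<Sum>x\<in>Lam N. rminus \<gamma> x) = (\<Sum>x\<in>Lam N. infsum (?f x) {1..})"
    by (rule sum.cong) (auto simp: Lam_def rminus_eq)
  also have "\<dots> = infsum (\<lambda>y. \<Sum>x\<in>Lam N. ?f x y) {1..}"
    using infsum_fsum[of "Lam N" ?f "{1..}"] summ by (simp add: Lam_def)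
  also have "\<dots> \<le> Sg \<gamma>"
    unfolding Sg_def
  proof (rule infsum_mono)
    show "(\<lambda>y. \<Sum>x\<in>Lam N. ?f x y) summable_on {1..}"
      using infsum_fsum[of "Lam N" ?f "{1..}"] summ by (simp add: Lam_def)
    show "(\<lambda>y. real_of_int y * pker \<gamma> y) summable_on {1..}" using summ_yp[OF assms] .
    fix y :: int assume "y \<in> {1..}"
    have "(\<Sum>x\<in>Lam N. ?f x y) = (\<Sum>x\<in>Lam N \<inter> {..y}. pker \<gamma> y)"
      by (simp add: sum.If_cases Lam_def Int_def)
    also have "\<dots> \<le> (\<Sum>x\<in>{1..y}. pker \<gamma> y)"
      by (rule sum_mono2) (auto simp: Lam_def pker_nonneg)
    also have "\<dots> = real_of_int y * pker \<gamma> y"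
      using \<open>y \<in> {1..}\<close> by simp
    finally show "(\<Sum>x\<in>Lam N. ?f x y) \<le> real_of_int y * pker \<gamma> y" .
  qed
  finally show ?thesis .
qed

lemma rplus_eq:
  shows "rplus \<gamma> N x = rminus \<gamma> (int N - x)"
proof -
  have "{..x - int N} = uminus ` {int N - x..}"
    by (auto simp: image_iff intro!: bexI[of _ "- _"])
  then have "rplus \<gamma> N x = infsum (pker \<gamma> \<circ> uminus) {int N - x..}"
    unfolding rplus_def by (simp only:) (rule infsum_reindex, simp)
  then show ?thesis
    unfolding rminus_def by (simp add: o_def pker_neg)
qed

lemma sum_rplus:
  "(\<Sum>x\<in>Lam N. rplus \<gamma> N x) = (\<Sum>x\<in>Lam N. rminus \<gamma> x)"
  unfolding rplus_eq
  by (rule sum.reindex_bij_witness[of _ "\<lambda>x. int N - x" "\<lambda>x. int N - x"]) (auto simp: Lam_def)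

lemma setint_bound:
  fixes f :: "real \<Rightarrow> real"
  assumes "t \<ge> 0" "\<And>s. \<bar>f s\<bar> \<le> C"
  shows "\<bar>LBINT s:{0..t}. f s\<bar> \<le> t * C"
proof -
  have C0: "0 \<le> C" using assms(2)[of 0] by linarith
  have int: "integrable lborel (\<lambda>s. C * indicator {0..t} s :: real)"
    by (intro integrable_mult_left_iff[THEN iffD2] disjI2 integrable_real_indicator) (auto simp: emeasure_lborel_Icc_eq)
  have ev: "(\<integral>s. C * indicator {0..t} s \<partial>lborel) = t * C"
    using assms(1) by simp
  have "(LBINT s:{0..t}. f s) \<le> (\<integral>s. C * indicator {0..t} s \<partial>lborel)"
    unfolding set_lebesgue_integral_def
    by (rule integral_mono'[OF int]) (use assms C0 in \<open>auto simp: indicator_def abs_le_iff\<close>)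
  moreover have "- (LBINT s:{0..t}. f s) \<le> (\<integral>s. C * indicator {0..t} s \<partial>lborel)"
    unfolding set_lebesgue_integral_def integral_minus[symmetric]
    by (rule integral_mono'[OF int]) (use assms C0 in \<open>auto simp: indicator_def abs_le_iff\<close>)
  ultimately show ?thesis using ev by linarith
qed

lemma expect_bound:
  fixes Y :: "'w \<Rightarrow> real"
  assumes "prob_space M" "\<And>\<omega>. \<bar>Y \<omega>\<bar> \<le> C"
  shows "(\<integral>\<omega>. \<bar>Y \<omega>\<bar> \<partial>M) \<le> C"
proof -
  interpret prob_space M by fact
  have C0: "0 \<le> C" using assms(2)[of undefined] by linarith
  have "(\<integral>\<omega>. \<bar>Y \<omega>\<bar> \<partial>M) \<le> (\<integral>\<omega>. C \<partial>M)"
    by (rule integral_mono') (use assms C0 in auto)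
  then show ?thesis by (simp add: prob_space)
qed


lemma gen_lim:
  fixes G :: "real \<Rightarrow> real" and r :: "nat \<Rightarrow> int \<Rightarrow> real"
    and M :: "nat \<Rightarrow> 'w measure" and X :: "nat \<Rightarrow> real \<Rightarrow> 'w \<Rightarrow> (int \<Rightarrow> bool)"
  assumes "\<theta> > 1" "t > 0" "0 < a" "a < 1" "\<And>u. \<bar>G u\<bar> \<le> B" "\<And>N x. 0 \<le> r N x"
    "\<And>N. (\<Sum>x\<in>Lam N. r N x) \<le> S" "\<And>N. prob_space (M N)"
  shows "limsup (\<lambda>N. ereal (\<integral>\<omega>. \<bar>LBINT s:{0..t}. real N powr (1 - \<theta>) *
            (\<Sum>x\<in>Lam N. G (real_of_int x / real N) * r N x *
               (of_bool (X N (s * real N ^ 2) \<omega> x) - a))\<bar> \<partial>M N)) = 0"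
proof -
  define E where "E N = (\<integral>\<omega>. \<bar>LBINT s:{0..t}. real N powr (1 - \<theta>) *
            (\<Sum>x\<in>Lam N. G (real_of_int x / real N) * r N x *
               (of_bool (X N (s * real N ^ 2) \<omega> x) - a))\<bar> \<partial>M N)" for N
  define c where "c N = t * (real N powr (1 - \<theta>) * (B * S))" for N
  have B0: "0 \<le> B" using assms(5)[of 0] by linarith
  have pt: "\<bar>real N powr (1 - \<theta>) * (\<Sum>x\<in>Lam N. G (real_of_int x / real N) * r N x *
               (of_bool (X N (s * real N ^ 2) \<omega> x) - a))\<bar> \<le> real N powr (1 - \<theta>) * (B * S)"
    for N s \<omega>
  proof -
    have "\<bar>\<Sum>x\<in>Lam N. G (real_of_int x / real N) * r N x *
               (of_bool (X N (s * real N ^ 2) \<omega> x) - a)\<bar>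
          \<le> (\<Sum>x\<in>Lam N. \<bar>G (real_of_int x / real N) * r N x *
               (of_bool (X N (s * real N ^ 2) \<omega> x) - a)\<bar>)"
      by (rule sum_abs)
    also have "\<dots> \<le> (\<Sum>x\<in>Lam N. B * r N x)"
    proof (rule sum_mono)
      fix x
      have ab: "\<bar>of_bool (X N (s * real N ^ 2) \<omega> x) - a\<bar> \<le> 1"
        using assms(3,4) by auto
      have "\<bar>G (real_of_int x / real N) * r N x * (of_bool (X N (s * real N ^ 2) \<omega> x) - a)\<bar>
          = \<bar>G (real_of_int x / real N)\<bar> * r N x * \<bar>of_bool (X N (s * real N ^ 2) \<omega> x) - a\<bar>"
        using assms(6)[of N x] by (simp add: abs_mult)
      also have "\<dots> \<le> B * r N x * 1"
        by (intro mult_mono assms(5) ab) (use assms(6)[of N x] B0 in auto)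
      finally show "\<bar>G (real_of_int x / real N) * r N x * (of_bool (X N (s * real N ^ 2) \<omega> x) - a)\<bar>
          \<le> B * r N x" by simp
    qed
    also have "\<dots> = B * (\<Sum>x\<in>Lam N. r N x)" by (simp add: sum_distrib_left)
    also have "\<dots> \<le> B * S" by (intro mult_left_mono assms(7) B0)
    finally have "\<bar>\<Sum>x\<in>Lam N. G (real_of_int x / real N) * r N x *
               (of_bool (X N (s * real N ^ 2) \<omega> x) - a)\<bar> \<le> B * S" .
    then show ?thesis
      by (simp add: abs_mult mult_left_mono)
  qed
  have Ele: "E N \<le> c N" for N
    unfolding E_def c_def
    by (rule expect_bound[OF assms(8)], rule setint_bound) (use assms(2) pt in auto)
  have Ege: "0 \<le> E N" for N
    unfolding E_def by simp
  have "(\<lambda>N. real N powr (1 - \<theta>)) \<longlonglongrightarrow> 0"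
    by (rule tendsto_neg_powr) (use assms(1) filterlim_real_sequentially in auto)
  then have "c \<longlonglongrightarrow> 0"
    unfolding c_def using tendsto_mult_right_zero tendsto_mult_left_zero by blast
  then have "E \<longlonglongrightarrow> 0"
    by (intro tendsto_sandwich[of "\<lambda>_. 0" E sequentially c 0])
       (simp_all add: Ele Ege)
  then have "(\<lambda>N. ereal (E N)) \<longlonglongrightarrow> ereal 0"
    by (rule tendsto_ereal)
  then have "limsup (\<lambda>N. ereal (E N)) = ereal 0"
    by (intro lim_imp_Limsup) auto
  then show ?thesis unfolding E_def by (simp add: zero_ereal_def)
qed

theorem lemma5p6:
  fixes \<gamma> \<alpha> \<beta> \<kappa> \<theta> t :: real
    and G :: "real \<Rightarrow> real"
    and \<mu> :: "nat \<Rightarrow> (int \<Rightarrow> bool) pmf"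
    and M :: "nat \<Rightarrow> 'w measure"
    and X :: "nat \<Rightarrow> real \<Rightarrow> 'w \<Rightarrow> (int \<Rightarrow> bool)"
  assumes "\<gamma> > 2" and "0 < \<alpha>" "\<alpha> < 1" and "0 < \<beta>" "\<beta> < 1" and "\<kappa> > 0"
    and "\<theta> > 1" and "t > 0"
    and "bounded (range G)"
    and "\<And>N. set_pmf (\<mu> N) \<subseteq> Conf N"
    and "\<And>N. markov_proc \<gamma> \<kappa> \<theta> \<alpha> \<beta> N (\<mu> N) (M N) (X N)"
  shows "limsup (\<lambda>N. ereal (\<integral>\<omega>. \<bar>LBINT s:{0..t}. real N powr (1 - \<theta>) *
            (\<Sum>x\<in>Lam N. G (real_of_int x / real N) * rminus \<gamma> x *
               (of_bool (X N (s * real N ^ 2) \<omega> x) - \<alpha>))\<bar> \<partial>M N)) = 0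
    \<and> limsup (\<lambda>N. ereal (\<integral>\<omega>. \<bar>LBINT s:{0..t}. real N powr (1 - \<theta>) *
            (\<Sum>x\<in>Lam N. G (real_of_int x / real N) * rplus \<gamma> N x *
               (of_bool (X N (s * real N ^ 2) \<omega> x) - \<beta>))\<bar> \<partial>M N)) = 0"
proof -
  obtain B where B: "\<And>u. \<bar>G u\<bar> \<le> B"
    using assms(9) unfolding bounded_iff by auto
  have g1: "\<gamma> > 1" using assms(1) by simp
  have ps: "prob_space (M N)" for N
    using assms(11)[of N] unfolding markov_proc_def by blast
  show ?thesis
  proof
    show "limsup (\<lambda>N. ereal (\<integral>\<omega>. \<bar>LBINT s:{0..t}. real N powr (1 - \<theta>) *
            (\<Sum>x\<in>Lam N. G (real_of_int x / real N) * rminus \<gamma> x *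
               (of_bool (X N (s * real N ^ 2) \<omega> x) - \<alpha>))\<bar> \<partial>M N)) = 0"
      by (rule gen_lim[where r="\<lambda>N. rminus \<gamma>" and S="Sg \<gamma>", OF assms(7,8,2,3) B])
         (auto simp: rminus_nonneg sum_rminus[OF g1] ps)
    show "limsup (\<lambda>N. ereal (\<integral>\<omega>. \<bar>LBINT s:{0..t}. real N powr (1 - \<theta>) *
            (\<Sum>x\<in>Lam N. G (real_of_int x / real N) * rplus \<gamma> N x *
               (of_bool (X N (s * real N ^ 2) \<omega> x) - \<beta>))\<bar> \<partial>M N)) = 0"
      by (rule gen_lim[where r="\<lambda>N. rplus \<gamma> N" and S="Sg \<gamma>", OF assms(7,8,4,5) B])
         (auto simp: rplus_nonneg sum_rplus sum_rminus[OF g1] ps)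
  qed
qed

end
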